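(* The subgroup of $G_2=\mathrm{GL}_2(\mathbb{F}_q)$ generated by $P_2^\ell$ and $\overline{P}_2^\ell$ is $G_2^\ell$.
   Context: $p$ is a prime, $q$ a power of $p$, $\ell\ne p$ a prime. $\mathbb{F}_q^{\times,\ell}$ is the subgroup of elements of $\mathbb{F}_q^\times$ of order prime to $\ell$, $G_2^\ell=\det^{-1}(\mathbb{F}_q^{\times,\ell})\subset G_2$. $P_2=\{\begin{psmallmatrix}a&b\\0&1\end{psmallmatrix}\}$ is the mirabolic subgroup, $\overline{P}_2=\{\begin{psmallmatrix}a&0\\c&1\end{psmallmatrix}\}$ the opposite mirabolic subgroup, $P_2^\ell=P_2\cap G_2^\ell$ and $\overline{P}_2^\ell=\overline{P}_2\cap G_2^\ell$. *)

theory Defs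
  imports "HOL-Analysis.Analysis" "HOL-Algebra.Generated_Groups"
begin

text \<open>2x2 matrices over a field: type 'a^2^2, entries A$i$j with i,j in {1,2}.\<close>

definition GL2 :: "('a::field ^ 2 ^ 2) monoid" where
  "GL2 = \<lparr> carrier = {A. det A \<noteq> 0}, mult = (\<lambda>A B. A ** B), one = mat 1 \<rparr>"

definition mult_order :: "'a::field \<Rightarrow> nat" where
  "mult_order x = (LEAST n. 0 < n \<and> x ^ n = 1)"

definition units_prime_to :: "nat \<Rightarrow> 'a::field set" where
  "units_prime_to l = {x. x \<noteq> 0 \<and> coprime (mult_order x) l}"

definition G2l :: "nat \<Rightarrow> ('a::field ^ 2 ^ 2) set" where
  "G2l l = {A. det A \<noteq> 0 \<and> det A \<in> units_prime_to l}"

definition P2 :: "('a::field ^ 2 ^ 2) set" where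
  "P2 = {A. A$1$1 \<noteq> 0 \<and> A$2$1 = 0 \<and> A$2$2 = 1}"

definition P2bar :: "('a::field ^ 2 ^ 2) set" where
  "P2bar = {A. A$1$1 \<noteq> 0 \<and> A$1$2 = 0 \<and> A$2$2 = 1}"

end

theory Submission
  imports Defs
begin

lemma ord_exists:
  fixes x :: "'a::{finite,field}"
  assumes "x \<noteq> 0"
  shows "\<exists>n>0. x ^ n = 1"
proof -
  have "\<not> inj (\<lambda>n::nat. x ^ n)"
  proof
    assume "inj (\<lambda>n::nat. x ^ n)"
    hence "finite (UNIV :: nat set)"
      using finite_imageD[of "\<lambda>n::nat. x ^ n" UNIV] by simp
    thus False by simp
  qed
  then obtain i j :: nat where ij: "i \<noteq> j" "x ^ i = x ^ j" unfolding inj_def by blast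
  have *: "\<exists>n>0. x ^ n = 1" if "i < j" "x ^ i = x ^ j" for i j :: nat
  proof -
    have "x ^ j = x ^ i * x ^ (j - i)" using that(1)
      by (metis le_add_diff_inverse less_imp_le power_add)
    with that have "x ^ (j - i) = 1" using assms by simp
    thus ?thesis using that by (intro exI[of _ "j - i"]) simp
  qed
  show ?thesis
    using ij *[of i j] *[of j i] by (cases "i < j") auto
qed

lemma ord_props:
  fixes x :: "'a::{finite,field}"
  assumes "x \<noteq> 0"
  shows "0 < mult_order x" "x ^ mult_order x = 1"
  using LeastI_ex[OF ord_exists[OF assms]] unfolding mult_order_def by auto

lemma ord_dvd:
  fixes x :: "'a::{finite,field}"
  assumes "x \<noteq> 0" "0 < n" "x ^ n = 1"
  shows "mult_order x dvd n"
proof -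
  let ?o = "mult_order x"
  have o: "0 < ?o" "x ^ ?o = 1" using ord_props[OF assms(1)] by auto
  have "n = ?o * (n div ?o) + n mod ?o" by simp
  hence "x ^ n = (x ^ ?o) ^ (n div ?o) * x ^ (n mod ?o)"
    by (metis power_add power_mult)
  hence r: "x ^ (n mod ?o) = 1" using o assms by simp
  have "n mod ?o = 0"
  proof (rule ccontr)
    assume "n mod ?o \<noteq> 0"
    hence "?o \<le> n mod ?o" unfolding mult_order_def using r
      by (metis (mono_tags, lifting) Least_le bot_nat_0.not_eq_extremum mult_order_def)
    thus False using o mod_less_divisor[OF o(1), of n] by simp
  qed
  thus ?thesis by (simp add: dvd_eq_mod_eq_0)
qed

lemma cop_iff:
  fixes n l :: nat
  assumes "prime l"
  shows "coprime n l \<longleftrightarrow> \<not> l dvd n"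
proof (intro iffI notI)
  assume c: "coprime n l" and d: "l dvd n"
  have "is_unit l" using coprime_common_divisor[OF c d dvd_refl] .
  thus False using assms by simp
next
  assume "\<not> l dvd n"
  hence "coprime l n" using prime_imp_coprime[OF assms] by simp
  thus "coprime n l" by (simp add: coprime_commute)
qed

lemma S_iff:
  fixes x :: "'a::{finite,field}"
  assumes "prime l"
  shows "x \<in> units_prime_to l \<longleftrightarrow> x \<noteq> 0 \<and> \<not> l dvd mult_order x"
  unfolding units_prime_to_def using cop_iff[OF assms, of "mult_order x"] by simp

lemma S_mult:
  fixes x y :: "'a::{finite,field}"
  assumes l: "prime l" and x: "x \<in> units_prime_to l" and y: "y \<in> units_prime_to l"
  shows "x * y \<in> units_prime_to l"
proof -
  have x0: "x \<noteq> 0" "\<not> l dvd mult_order x" using x S_iff[OF l] by auto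
  have y0: "y \<noteq> 0" "\<not> l dvd mult_order y" using y S_iff[OF l] by auto
  have xy: "x * y \<noteq> 0" using x0 y0 by simp
  obtain a b where a: "a = mult_order x" and b: "b = mult_order y" by blast
  have ax: "x ^ a = 1" "0 < a" using ord_props[OF x0(1)] a by auto
  have by': "y ^ b = 1" "0 < b" using ord_props[OF y0(1)] b by auto
  have e1: "x ^ (a * b) = 1" by (metis ax(1) power_mult power_one)
  have e2: "y ^ (a * b) = 1" by (metis by'(1) mult.commute power_mult power_one)
  have "(x*y) ^ (a * b) = 1" by (simp only: power_mult_distrib e1 e2) simp
  moreover have "0 < a * b" using ax by' by simp
  ultimately have d: "mult_order (x*y) dvd a * b"
    using ord_dvd[OF xy] by blast
  have "\<not> l dvd a * b"
    using x0 y0 l a b by (simp add: prime_dvd_mult_iff)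
  hence "\<not> l dvd mult_order (x*y)" using d dvd_trans by blast
  with xy show ?thesis by (intro S_iff[OF l, THEN iffD2] conjI)
qed

lemma S_inv:
  fixes x :: "'a::{finite,field}"
  assumes l: "prime l" and x: "x \<in> units_prime_to l"
  shows "inverse x \<in> units_prime_to l"
proof -
  have x0: "x \<noteq> 0" "\<not> l dvd mult_order x" using x S_iff[OF l] by auto
  have "(inverse x) ^ mult_order x = 1"
    using ord_props[OF x0(1)] by (simp add: power_inverse)
  hence "mult_order (inverse x) dvd mult_order x"
    using ord_dvd[of "inverse x"] ord_props[OF x0(1)] x0 by simp
  hence "\<not> l dvd mult_order (inverse x)" using x0 dvd_trans by blast
  with x0 show ?thesis by (intro S_iff[OF l, THEN iffD2] conjI) simp_all
qed

lemma S_one: "prime l \<Longrightarrow> (1::'a::{finite,field}) \<in> units_prime_to l"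
proof -
  have "mult_order (1::'a) = 1" unfolding mult_order_def
    by (rule Least_equality) auto
  thus ?thesis unfolding units_prime_to_def by simp
qed


definition mk :: "'a::field \<Rightarrow> 'a \<Rightarrow> 'a \<Rightarrow> 'a \<Rightarrow> 'a^2^2" where
  "mk a b c d = (\<chi> i j. if i = 1 then (if j = 1 then a else b) else (if j = 1 then c else d))"

lemma two_ne_one: "(2::2) \<noteq> 1" by simp

lemma mk_nth [simp]:
  "mk a b c d $ 1 $ 1 = a" "mk a b c d $ 1 $ 2 = b"
  "mk a b c d $ 2 $ 1 = c" "mk a b c d $ 2 $ 2 = d"
  by (simp_all add: mk_def)

lemma mk_eta: "(A::'a::field^2^2) = mk (A$1$1) (A$1$2) (A$2$1) (A$2$2)"
  by (simp add: vec_eq_iff forall_2)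

lemma mk_eq_iff: "(A::'a::field^2^2) = mk a b c d \<longleftrightarrow>
    A$1$1 = a \<and> A$1$2 = b \<and> A$2$1 = c \<and> A$2$2 = d"
  by (simp add: vec_eq_iff forall_2)

lemma mk_mult: "mk a b c d ** mk e f g h = mk (a*e+b*g) (a*f+b*h) (c*e+d*g) (c*f+d*h)"
  by (simp add: vec_eq_iff forall_2 matrix_matrix_mult_def sum_2)

lemma mk_det: "det (mk a b c d) = a*d - b*c"
  by (simp add: det_2)

lemma GL2_group: "group (GL2 :: ('a::field^2^2) monoid)"
proof (rule groupI)
  fix x :: "'a^2^2"
  assume "x \<in> carrier GL2"
  hence dx: "det x \<noteq> 0" by (simp add: GL2_def)
  hence "invertible x" by (simp add: invertible_det_nz)
  then obtain y where y: "y ** x = mat 1" unfolding invertible_def by blast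
  hence "det y * det x = 1" by (metis det_I det_mul)
  hence "det y \<noteq> 0" by auto
  thus "\<exists>y \<in> carrier GL2. y \<otimes>\<^bsub>GL2\<^esub> x = \<one>\<^bsub>GL2\<^esub>" using y by (auto simp: GL2_def)
qed (auto simp: GL2_def det_mul matrix_mul_assoc)

lemma G2l_sub: "G2l l \<subseteq> carrier GL2"
  by (auto simp: G2l_def GL2_def)

lemma G2l_subgroup:
  assumes l: "prime l"
  shows "subgroup (G2l l) (GL2 :: ('a::{finite,field}^2^2) monoid)"
proof -
  interpret group "GL2 :: ('a^2^2) monoid" by (rule GL2_group)
  show ?thesis
  proof (rule subgroupI)
    show "G2l l \<subseteq> carrier (GL2 :: ('a^2^2) monoid)" by (rule G2l_sub)
    have "mat 1 \<in> (G2l l :: ('a^2^2) set)" using S_one[OF l] by (simp add: G2l_def)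
    thus "G2l l \<noteq> ({} :: ('a^2^2) set)" by blast
  next
    fix a :: "'a^2^2"
    assume a: "a \<in> G2l l"
    hence ac: "a \<in> carrier GL2" using G2l_sub by blast
    have "inv\<^bsub>GL2\<^esub> a \<otimes>\<^bsub>GL2\<^esub> a = \<one>\<^bsub>GL2\<^esub>" using l_inv[OF ac] .
    moreover obtain b where b: "b = inv\<^bsub>GL2\<^esub> a" by blast
    ultimately have "b ** a = mat 1" by (simp add: GL2_def)
    hence "det b * det a = 1" by (metis det_I det_mul)
    hence "det (inv\<^bsub>GL2\<^esub> a) = inverse (det a)" unfolding b[symmetric]
      by (metis inverse_unique mult.commute)
    moreover have "inverse (det a) \<in> units_prime_to l"
      using a by (intro S_inv[OF l]) (simp add: G2l_def)
    ultimately show "inv\<^bsub>GL2\<^esub> a \<in> G2l l" by (simp add: G2l_def units_prime_to_def)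
  next
    fix a b :: "'a^2^2"
    assume "a \<in> G2l l" "b \<in> G2l l"
    thus "a \<otimes>\<^bsub>GL2\<^esub> b \<in> G2l l"
      using S_mult[OF l, of "det a" "det b"]
      by (simp add: G2l_def GL2_def det_mul units_prime_to_def)
  qed
qed


lemma U_in: "prime l \<Longrightarrow> mk 1 x 0 1 \<in> P2 \<inter> (G2l l :: ('a::{finite,field}^2^2) set)"
  using S_one[where 'a='a] by (simp add: P2_def G2l_def mk_det)

lemma L_in: "\<alpha> \<in> units_prime_to l \<Longrightarrow> mk \<alpha> 0 c 1 \<in> P2bar \<inter> (G2l l :: ('a::{finite,field}^2^2) set)"
  by (simp add: P2bar_def G2l_def mk_det units_prime_to_def)

lemma gen_c:
  fixes A :: "'a::{finite,field}^2^2"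
  assumes l: "prime l" and A: "A \<in> G2l l" and c: "A$2$1 \<noteq> 0"
  shows "A \<in> generate GL2 ((P2 \<inter> G2l l) \<union> (P2bar \<inter> G2l l))"
proof -
  let ?X = "(P2 \<inter> G2l l) \<union> (P2bar \<inter> (G2l l :: ('a^2^2) set))"
  define a b cc d where "a = A$1$1" "b = A$1$2" "cc = A$2$1" "d = A$2$2"
  define \<alpha> where "\<alpha> = det A"
  have \<alpha>S: "\<alpha> \<in> units_prime_to l" using A by (simp add: G2l_def \<alpha>_def)
  have det: "\<alpha> = a*d - b*cc" unfolding \<alpha>_def a_b_cc_d_def by (simp add: det_2)
  have c0: "cc \<noteq> 0" using c a_b_cc_d_def by simp
  define x where "x = (a - \<alpha>) / cc"
  define y where "y = (d - 1) / cc"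
  have eq: "A = mk 1 x 0 1 ** mk \<alpha> 0 cc 1 ** mk 1 y 0 1"
    unfolding mk_mult mk_eq_iff a_b_cc_d_def[symmetric] x_def y_def
    using c0 unfolding det by (simp add: field_simps)
  have g1: "mk 1 x 0 1 \<in> generate GL2 ?X" using U_in[OF l] by (blast intro: generate.incl)
  have g2: "mk \<alpha> 0 cc 1 \<in> generate GL2 ?X" using L_in[OF \<alpha>S] by (blast intro: generate.incl)
  have g3: "mk 1 y 0 1 \<in> generate GL2 ?X" using U_in[OF l] by (blast intro: generate.incl)
  have "mk 1 x 0 1 ** mk \<alpha> 0 cc 1 \<in> generate GL2 ?X"
    using generate.eng[OF g1 g2] by (simp add: GL2_def)
  hence "mk 1 x 0 1 ** mk \<alpha> 0 cc 1 ** mk 1 y 0 1 \<in> generate GL2 ?X"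
    using generate.eng[OF _ g3] by (simp add: GL2_def)
  thus ?thesis using eq by simp
qed

theorem lemmaB1:
  fixes p l :: nat
  assumes "prime p" and "CHAR('a::{finite,field}) = p"
    and "prime l" and "l \<noteq> p"
  shows "generate (GL2 :: ('a ^ 2 ^ 2) monoid)
           ((P2 \<inter> G2l l) \<union> (P2bar \<inter> G2l l)) = G2l l"
proof
  let ?X = "(P2 \<inter> G2l l) \<union> (P2bar \<inter> (G2l l :: ('a^2^2) set))"
  interpret group "GL2 :: ('a^2^2) monoid" by (rule GL2_group)
  show "generate GL2 ?X \<subseteq> G2l l"
    by (rule generate_subgroup_incl[OF _ G2l_subgroup[OF assms(3)]]) blast
  show "G2l l \<subseteq> generate GL2 ?X"
  proof
    fix A :: "'a^2^2"
    assume A: "A \<in> G2l l"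
    show "A \<in> generate GL2 ?X"
    proof (cases "A$2$1 = 0")
      case False
      thus ?thesis using gen_c[OF assms(3) A] by blast
    next
      case True
      have dA: "det A = A$1$1 * A$2$2" using True by (simp add: det_2)
      have "det A \<noteq> 0" using A by (simp add: G2l_def)
      hence a0: "A$1$1 \<noteq> 0" using dA by auto
      define B where "B = mk 1 0 1 1 ** A"
      have dB: "det B = det A" unfolding B_def by (simp add: det_mul mk_det)
      have B21: "B$2$1 \<noteq> 0" unfolding B_def
        by (subst mk_eta[of A]) (simp add: mk_mult True a0)
      have BG: "B \<in> G2l l" using A dB by (simp add: G2l_def)
      have gB: "B \<in> generate GL2 ?X" using gen_c[OF assms(3) BG B21] .
      have S1: "(1::'a) \<in> units_prime_to l" by (rule S_one[OF assms(3)])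
      have gL: "mk 1 0 (-1) 1 \<in> generate GL2 ?X"
        using L_in[OF S1] by (blast intro: generate.incl)
      have "mk 1 0 (-1) 1 ** B \<in> generate GL2 ?X"
        using generate.eng[OF gL gB] by (simp add: GL2_def)
      moreover have "mk 1 0 (-1) 1 ** B = A" unfolding B_def
      proof -
        have "mk 1 0 (-1) 1 ** mk 1 0 1 1 = (mat 1 :: 'a^2^2)"
        proof -
          have "(mat 1 :: 'a^2^2) = mk 1 0 0 1"
            by (simp only: mk_eq_iff) (simp add: mat_def two_ne_one)
          thus ?thesis by (simp add: mk_mult)
        qed
        thus "mk 1 0 (-1) 1 ** (mk 1 0 1 1 ** A) = A"
          by (simp add: matrix_mul_assoc)
      qed
      ultimately show ?thesis by simp
    qed
  qed
qed

end
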